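(* Let $(X,\{R_i\}_{i=0}^d)$ be a symmetric association scheme with adjacency matrices $A_0=I,\dots,A_d$ and intersection numbers $p_{ij}^k$, and let $W=\sum_{i=0}^dw_iA_i$ with $w_0=1$ be a complex Hadamard matrix. Suppose there exists $i\in\{1,\dots,d-1\}$ such that $p_{i_1,j_1}^i>0$ for all $i_1,j_1\in\{1,\dots,d-1\}$, and moreover $p_{i,j}^d>0$ for all $j\in\{1,\dots,d-1\}$. Then \[ H_4(W)\setminus\{1\}=\left\{\frac{w_{i_1}w_{i_2}}{w_{j_1}w_{j_2}}\;\middle|\;i_1,i_2,j_1,j_2\in\{1,\dots,d\}\right\}\setminus\{1\}. \]
   Context: An association scheme $(X,\{R_i\}_{i=0}^d)$ is a partition of $X\times X$ into relations $R_0=\{(x,x)\}$, $R_1,\dots,R_d$ such that for $(x,y)\in R_k$ the number $p_{ij}^k=|\{z\in X:(x,z)\in R_i,(z,y)\in R_j\}|$ depends only on $i,j,k$; symmetric means each $R_i$ is symmetric. $A_i$ is the $(0,1)$-matrix of $R_i$. A complex Hadamard matrix is a square complex matrix $H$ of order $n=|X|$ with entries of absolute value $1$ and $HH^*=nI$. For $W$ indexed by $X$, \[ H_4(W)=\left\{\frac{W_{x_1,y_1}W_{x_2,y_2}}{W_{x_2,y_1}W_{x_1,y_2}}\;\middle|\;x_1,x_2,y_1,y_2\in X,\ |\{x_1,x_2,y_1,y_2\}|=4\right\}. \] *)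

theory Defs
  imports Complex_Main
begin

text \<open>An association scheme on the finite set X with classes R_0,...,R_d is encoded by
  the class function R: (x,y) belongs to relation R_i iff R x y = i.
  A_i is the 0/1 matrix of R_i, so a matrix sum_i w_i A_i has (x,y) entry w (R x y).\<close>

definition pcount :: "'a set \<Rightarrow> ('a \<Rightarrow> 'a \<Rightarrow> nat) \<Rightarrow> nat \<Rightarrow> nat \<Rightarrow> 'a \<Rightarrow> 'a \<Rightarrow> nat" where
  "pcount X R i j x y = card {z \<in> X. R x z = i \<and> R z y = j}"

definition assoc_scheme :: "'a set \<Rightarrow> nat \<Rightarrow> ('a \<Rightarrow> 'a \<Rightarrow> nat) \<Rightarrow> bool" where
  "assoc_scheme X d R \<longleftrightarrow>
     finite X \<and>
     (\<forall>x\<in>X. \<forall>y\<in>X. R x y \<le> d) \<and>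
     (\<forall>i\<le>d. \<exists>x\<in>X. \<exists>y\<in>X. R x y = i) \<and>
     (\<forall>x\<in>X. \<forall>y\<in>X. R x y = 0 \<longleftrightarrow> x = y) \<and>
     (\<forall>i\<le>d. \<forall>j\<le>d. \<forall>k\<le>d. \<forall>x\<in>X. \<forall>y\<in>X. \<forall>x'\<in>X. \<forall>y'\<in>X.
        R x y = k \<longrightarrow> R x' y' = k \<longrightarrow> pcount X R i j x y = pcount X R i j x' y')"

definition symmetric_scheme :: "'a set \<Rightarrow> nat \<Rightarrow> ('a \<Rightarrow> 'a \<Rightarrow> nat) \<Rightarrow> bool" where
  "symmetric_scheme X d R \<longleftrightarrow> assoc_scheme X d R \<and> (\<forall>x\<in>X. \<forall>y\<in>X. R x y = R y x)"

definition pnum :: "'a set \<Rightarrow> ('a \<Rightarrow> 'a \<Rightarrow> nat) \<Rightarrow> nat \<Rightarrow> nat \<Rightarrow> nat \<Rightarrow> nat" where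
  "pnum X R i j k = (THE n. \<forall>x\<in>X. \<forall>y\<in>X. R x y = k \<longrightarrow> pcount X R i j x y = n)"

definition complex_hadamard :: "'a set \<Rightarrow> ('a \<Rightarrow> 'a \<Rightarrow> complex) \<Rightarrow> bool" where
  "complex_hadamard X H \<longleftrightarrow>
     (\<forall>x\<in>X. \<forall>y\<in>X. cmod (H x y) = 1) \<and>
     (\<forall>x\<in>X. \<forall>y\<in>X. (\<Sum>z\<in>X. H x z * cnj (H y z)) = (if x = y then of_nat (card X) else 0))"

definition H4 :: "'a set \<Rightarrow> ('a \<Rightarrow> 'a \<Rightarrow> complex) \<Rightarrow> complex set" where
  "H4 X W = {W x1 y1 * W x2 y2 / (W x2 y1 * W x1 y2) | x1 x2 y1 y2.
              x1 \<in> X \<and> x2 \<in> X \<and> y1 \<in> X \<and> y2 \<in> X \<and> card {x1, x2, y1, y2} = 4}"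

end

theory Submission
  imports Defs
begin

definition tri :: "'a set \<Rightarrow> ('a \<Rightarrow> 'a \<Rightarrow> nat) \<Rightarrow> nat \<Rightarrow> nat \<Rightarrow> nat \<Rightarrow> bool" where
  "tri X R a b k \<longleftrightarrow> (\<forall>x\<in>X. \<forall>y\<in>X. R x y = k \<longrightarrow> (\<exists>z\<in>X. R x z = a \<and> R z y = b))"

lemma pnum_eq:
  assumes "assoc_scheme X d R" "k \<le> d" "i \<le> d" "j \<le> d" "x \<in> X" "y \<in> X" "R x y = k"
  shows "pnum X R i j k = pcount X R i j x y"
  unfolding pnum_def
proof (rule the_equality)
  show "\<forall>x'\<in>X. \<forall>y'\<in>X. R x' y' = k \<longrightarrow> pcount X R i j x' y' = pcount X R i j x y"
    using assms unfolding assoc_scheme_def by metis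
next
  fix n assume "\<forall>x\<in>X. \<forall>y\<in>X. R x y = k \<longrightarrow> pcount X R i j x y = n"
  then show "n = pcount X R i j x y" using assms by auto
qed

lemma tri_of_pnum:
  assumes "assoc_scheme X d R" "a \<le> d" "b \<le> d" "k \<le> d" "pnum X R a b k > 0"
  shows "tri X R a b k"
  unfolding tri_def
proof (intro ballI impI)
  fix x y assume xy: "x \<in> X" "y \<in> X" "R x y = k"
  then have "pcount X R a b x y > 0" using pnum_eq[OF assms(1,4,2,3) xy] assms(5) by simp
  then have "{z \<in> X. R x z = a \<and> R z y = b} \<noteq> {}" unfolding pcount_def
    by (metis card.empty less_irrefl)
  then show "\<exists>z\<in>X. R x z = a \<and> R z y = b" by blast
qed

lemma tri_swap:
  assumes "symmetric_scheme X d R" "tri X R a b k"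
  shows "tri X R b a k"
  using assms unfolding tri_def symmetric_scheme_def by metis

lemma tri_rot:
  assumes S: "symmetric_scheme X d R" and le: "a \<le> d" "b \<le> d" "k \<le> d" and T: "tri X R a b k"
  shows "tri X R k b a"
proof -
  have A: "assoc_scheme X d R" and sym: "\<forall>x\<in>X. \<forall>y\<in>X. R x y = R y x"
    using S unfolding symmetric_scheme_def by auto
  have fin: "finite X" using A unfolding assoc_scheme_def by auto
  obtain x y where xy: "x \<in> X" "y \<in> X" "R x y = k" using A le unfolding assoc_scheme_def by metis
  obtain z where z: "z \<in> X" "R x z = a" "R z y = b" using T xy unfolding tri_def by metis
  have "y \<in> {t \<in> X. R x t = k \<and> R t z = b}" using xy z sym by auto
  then have pos: "pcount X R k b x z > 0" unfolding pcount_def using fin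
    by (metis (no_types, lifting) card_gt_0_iff empty_iff finite_subset mem_Collect_eq subsetI)
  show ?thesis unfolding tri_def
  proof (intro ballI impI)
    fix u v assume uv: "u \<in> X" "v \<in> X" "R u v = a"
    have "pcount X R k b u v = pcount X R k b x z"
      using A le uv xy z unfolding assoc_scheme_def by metis
    with pos have "{t \<in> X. R u t = k \<and> R t v = b} \<noteq> {}" unfolding pcount_def
      by (metis card.empty less_irrefl)
    then show "\<exists>t\<in>X. R u t = k \<and> R t v = b" by blast
  qed
qed

lemma cyc:
  assumes S: "symmetric_scheme X d R" and k: "1 \<le> k" "k \<le> d"
    and pos: "1 \<le> i1" "1 \<le> j1" "1 \<le> i2" "1 \<le> j2"
    and T1: "tri X R i1 j1 k" and T2: "tri X R i2 j2 k" and nd: "\<not> (i1 = j2 \<and> j1 = i2)"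
  shows "w i1 * w i2 / (w j1 * w j2) \<in> H4 X (\<lambda>x y. w (R x y))"
proof -
  have A: "assoc_scheme X d R" and sym: "\<forall>x\<in>X. \<forall>y\<in>X. R x y = R y x"
    using S unfolding symmetric_scheme_def by auto
  have z: "\<forall>x\<in>X. \<forall>y\<in>X. R x y = 0 \<longleftrightarrow> x = y" using A unfolding assoc_scheme_def by auto
  obtain x1 x2 where xx: "x1 \<in> X" "x2 \<in> X" "R x1 x2 = k" using A k unfolding assoc_scheme_def by metis
  obtain y1 where y1: "y1 \<in> X" "R x1 y1 = i1" "R y1 x2 = j1" using T1 xx unfolding tri_def by metis
  have "R x2 x1 = k" using xx sym by metis
  then obtain y2 where y2: "y2 \<in> X" "R x2 y2 = i2" "R y2 x1 = j2" using T2 xx unfolding tri_def by metis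
  have d1: "x1 \<noteq> x2" using xx z k by (metis not_one_le_zero)
  have d2: "y1 \<noteq> x1" "y1 \<noteq> x2" "y2 \<noteq> x1" "y2 \<noteq> x2" using xx y1 y2 z pos by (metis not_one_le_zero)+
  have d3: "y1 \<noteq> y2"
  proof
    assume "y1 = y2"
    then have "i1 = j2" "j1 = i2" using y1 y2 xx sym by metis+
    then show False using nd by auto
  qed
  have c: "card {x1, x2, y1, y2} = 4" using d1 d2 d3 by auto
  have e: "R x2 y1 = j1" "R x1 y2 = j2" using y1 y2 xx sym by metis+
  show ?thesis unfolding H4_def
    using xx y1 y2 c e by (smt (verit, best) mem_Collect_eq)
qed

lemma as_part0:
  assumes "assoc_scheme X d R"
  shows "finite X"
  using assms[unfolded assoc_scheme_def, THEN conjunct1] .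

lemma as_part1:
  assumes "assoc_scheme X d R"
  shows "\<forall>x\<in>X. \<forall>y\<in>X. R x y \<le> d"
  using assms[unfolded assoc_scheme_def, THEN conjunct2, THEN conjunct1] .

lemma as_part2:
  assumes "assoc_scheme X d R"
  shows "\<forall>i\<le>d. \<exists>x\<in>X. \<exists>y\<in>X. R x y = i"
  using assms[unfolded assoc_scheme_def, THEN conjunct2, THEN conjunct2, THEN conjunct1] .

lemma as_part3:
  assumes "assoc_scheme X d R"
  shows "\<forall>x\<in>X. \<forall>y\<in>X. R x y = 0 \<longleftrightarrow> x = y"
  using assms[unfolded assoc_scheme_def, THEN conjunct2, THEN conjunct2, THEN conjunct2, THEN conjunct1] .

lemmas as_parts = as_part0 as_part1 as_part2 as_part3

theorem lemma5p3:
  fixes X :: "'a set" and d :: nat and R :: "'a \<Rightarrow> 'a \<Rightarrow> nat" and w :: "nat \<Rightarrow> complex"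
  assumes "symmetric_scheme X d R"
    and "w 0 = 1"
    and "complex_hadamard X (\<lambda>x y. w (R x y))"
    and "\<exists>i\<in>{1..d-1}. (\<forall>i1\<in>{1..d-1}. \<forall>j1\<in>{1..d-1}. pnum X R i1 j1 i > 0)
                      \<and> (\<forall>j\<in>{1..d-1}. pnum X R i j d > 0)"
  shows "H4 X (\<lambda>x y. w (R x y)) - {1} =
         {w i1 * w i2 / (w j1 * w j2) | i1 i2 j1 j2.
            i1 \<in> {1..d} \<and> i2 \<in> {1..d} \<and> j1 \<in> {1..d} \<and> j2 \<in> {1..d}} - {1}"
proof -
  have S: "symmetric_scheme X d R" by fact
  have A: "assoc_scheme X d R" and sym: "\<forall>x\<in>X. \<forall>y\<in>X. R x y = R y x"
    using assms(1) unfolding symmetric_scheme_def by blast+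
  have z: "\<forall>x\<in>X. \<forall>y\<in>X. R x y = 0 \<longleftrightarrow> x = y" using as_part3[OF A] .
  have bnd: "\<forall>x\<in>X. \<forall>y\<in>X. R x y \<le> d" using as_part1[OF A] .
  obtain i where i: "i \<in> {1..d-1}" and P1: "\<forall>i1\<in>{1..d-1}. \<forall>j1\<in>{1..d-1}. pnum X R i1 j1 i > 0"
    and P2: "\<forall>j\<in>{1..d-1}. pnum X R i j d > 0" using assms(4) by blast
  have d2: "2 \<le> d" using i by auto
  have nz: "w a \<noteq> 0" if "a \<le> d" for a
  proof -
    have ex: "\<forall>i\<le>d. \<exists>x\<in>X. \<exists>y\<in>X. R x y = i" using as_part2[OF A] .
    have "\<exists>x\<in>X. \<exists>y\<in>X. R x y = a" using ex that by simp
    then obtain x y where xy: "x \<in> X" "y \<in> X" "R x y = a" by blast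
    have cm: "\<forall>x\<in>X. \<forall>y\<in>X. cmod (w (R x y)) = 1" using assms(3)[unfolded complex_hadamard_def, THEN conjunct1] .
    then have "cmod (w a) = 1" using xy by blast
    then show ?thesis by (metis norm_zero zero_neq_one)
  qed
  have TT: "tri X R a b i" if "1 \<le> a" "a \<le> d" "1 \<le> b" "b \<le> d" "\<not> (a = d \<and> b = d)" for a b
  proof (cases "a < d \<and> b < d")
    case True
    then show ?thesis using tri_of_pnum[OF A, of a b i] P1 that i by auto
  next
    case False
    have td: "tri X R d c i" if "1 \<le> c" "c < d" for c
    proof -
      have "tri X R i c d" using tri_of_pnum[OF A, of i c d] P2 that i by auto
      then show ?thesis using tri_rot[OF S, of i c d] i that by auto
    qed
    show ?thesis
    proof (cases "a = d")
      case True
      then show ?thesis using td that by auto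
    next
      case False
      then have "b = d" "a < d" using \<open>\<not> (a < d \<and> b < d)\<close> that by auto
      then show ?thesis using td[of a] tri_swap[OF S] that by auto
    qed
  qed
  have ik: "1 \<le> i" "i \<le> d" using i by auto
  show ?thesis
  proof (rule set_eqI, rule iffI)
    fix v assume "v \<in> H4 X (\<lambda>x y. w (R x y)) - {1}"
    then obtain x1 x2 y1 y2 where v: "v = w (R x1 y1) * w (R x2 y2) / (w (R x2 y1) * w (R x1 y2))"
      and m: "x1 \<in> X" "x2 \<in> X" "y1 \<in> X" "y2 \<in> X" and c: "card {x1, x2, y1, y2} = 4" and v1: "v \<noteq> 1"
      unfolding H4_def by blast
    have "x1 \<noteq> y1 \<and> x2 \<noteq> y2 \<and> x2 \<noteq> y1 \<and> x1 \<noteq> y2"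
    proof (rule ccontr)
      assume "\<not> ?thesis"
      then have "card {x1, x2, y1, y2} \<le> 3"
        by (auto simp: card_insert_if insert_commute)
      then show False using c by simp
    qed
    then have "R x1 y1 \<in> {1..d}" "R x2 y2 \<in> {1..d}" "R x2 y1 \<in> {1..d}" "R x1 y2 \<in> {1..d}"
      using m z bnd by (auto simp: Suc_le_eq)
    then show "v \<in> {w i1 * w i2 / (w j1 * w j2) | i1 i2 j1 j2.
            i1 \<in> {1..d} \<and> i2 \<in> {1..d} \<and> j1 \<in> {1..d} \<and> j2 \<in> {1..d}} - {1}"
      using v v1 by blast
  next
    fix v assume "v \<in> {w i1 * w i2 / (w j1 * w j2) | i1 i2 j1 j2.
            i1 \<in> {1..d} \<and> i2 \<in> {1..d} \<and> j1 \<in> {1..d} \<and> j2 \<in> {1..d}} - {1}"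
    then obtain i1 i2 j1 j2 where v: "v = w i1 * w i2 / (w j1 * w j2)"
      and r: "i1 \<in> {1..d}" "i2 \<in> {1..d}" "j1 \<in> {1..d}" "j2 \<in> {1..d}" and v1: "v \<noteq> 1" by blast
    have nzs: "w i1 \<noteq> 0" "w i2 \<noteq> 0" "w j1 \<noteq> 0" "w j2 \<noteq> 0" "w d \<noteq> 0" "w 1 \<noteq> 0"
      using nz r d2 by auto
    have "v \<in> H4 X (\<lambda>x y. w (R x y))"
    proof (cases "\<not> (i1 = d \<and> j1 = d) \<and> \<not> (i2 = d \<and> j2 = d)")
      case True
      have "\<not> (i1 = j2 \<and> j1 = i2)"
      proof
        assume "i1 = j2 \<and> j1 = i2"
        then have "v = 1" using v nzs by simp
        then show False using v1 by simp
      qed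
      then show ?thesis using cyc[OF S ik, of i1 j1 i2 j2 w] TT True r v by auto
    next
      case F1: False
      show ?thesis
      proof (cases "\<not> (i1 = d \<and> j2 = d) \<and> \<not> (i2 = d \<and> j1 = d)")
        case True
        have "\<not> (i1 = j1 \<and> j2 = i2)"
        proof
          assume "i1 = j1 \<and> j2 = i2"
          then have "v = 1" using v nzs by simp
          then show False using v1 by simp
        qed
        moreover have "v = w i1 * w i2 / (w j2 * w j1)" using v by (simp add: mult.commute)
        ultimately show ?thesis using cyc[OF S ik, of i1 j2 i2 j1 w] TT True r by auto
      next
        case F2: False
        have m1: "1 \<le> (1::nat)" "(1::nat) \<le> d" "\<not> ((1::nat) = d)" using d2 by auto
        have T11: "tri X R 1 1 i" using TT[of 1 1] m1 by auto
        consider "i1 = d" "j1 = d" "j2 = d" | "i1 = d" "j1 = d" "i2 = d"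
          | "i2 = d" "j2 = d" "i1 = d" | "i2 = d" "j2 = d" "j1 = d"
          using F1 F2 by blast
        then show ?thesis
        proof cases
          case 1
          then have "i2 \<noteq> d" using v v1 nzs by auto
          moreover have "v = w 1 * w i2 / (w 1 * w d)" using v 1 nzs by (simp add: field_simps)
          ultimately show ?thesis using cyc[OF S ik, of 1 1 i2 d w] TT[of i2 d] T11 r m1 by auto
        next
          case 2
          then have "j2 \<noteq> d" using v v1 nzs by auto
          moreover have "v = w d * w 1 / (w 1 * w j2)" using v 2 nzs by (simp add: field_simps)
          ultimately show ?thesis using cyc[OF S ik, of d 1 1 j2 w] TT[of d 1] TT[of 1 j2] r m1 by auto
        next
          case 3
          then have "j1 \<noteq> d" using v v1 nzs by auto
          moreover have "v = w d * w 1 / (w j1 * w 1)" using v 3 nzs by (simp add: field_simps)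
          ultimately show ?thesis using cyc[OF S ik, of d j1 1 1 w] TT[of d j1] T11 r m1 by auto
        next
          case 4
          then have "i1 \<noteq> d" using v v1 nzs by auto
          moreover have "v = w i1 * w 1 / (w d * w 1)" using v 4 nzs by (simp add: field_simps)
          ultimately show ?thesis using cyc[OF S ik, of i1 d 1 1 w] TT[of i1 d] T11 r m1 by auto
        qed
      qed
    qed
    then show "v \<in> H4 X (\<lambda>x y. w (R x y)) - {1}" using v1 by blast
  qed
qed

end
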